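(* Let $f$ be a non-degenerate Hermitian or quadratic form of finite Witt index $n\ge2$ on a vector space $V$ over a field $\mathbb F$, with polar space $\mathcal P=\mathcal P(f)$ naturally embedded in $\mathrm{PG}(V)$, and assume $\mathcal P$ is not a grid (i.e. not the case $f$ quadratic, $n=2$, $\dim V=4$). Let $X$ be a nice subspace of $\mathcal P$. Then $\langle X\rangle_{\mathrm{PG}(V)}\cap\mathcal P=X$.
   Context: Points of $\mathcal P(f)$ are the 1-spaces of $V$ isotropic (Hermitian case) or singular (quadratic case) for $f$; lines are the totally isotropic/singular 2-spaces. A subspace of $\mathcal P$ is a set of points containing every line meeting it in at least two points. A nice subspace of $\mathcal P$ is a subspace containing two mutually disjoint maximal singular subspaces of $\mathcal P$ (equivalently, $\mathcal P$ induces on it a non-degenerate polar space of rank $n$). $\langle X\rangle_{\mathrm{PG}(V)}$ is the projective subspace of $\mathrm{PG}(V)$ spanned by the points of $X$. For quadratic $q$, non-degenerate means $q(v)\ne0$ for all nonzero $v$ in the radical of its bilinearization. *)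

theory Defs
  imports Main "HOL.Vector_Spaces"
begin

text \<open>Vector space V = the type 'v with scalar multiplication scale over the field 'k
  (assumed: vector_space scale). Span/independence are the library notions of Modules.\<close>

definition vspan :: "('k::field \<Rightarrow> 'v::ab_group_add \<Rightarrow> 'v) \<Rightarrow> 'v set \<Rightarrow> 'v set" where
  "vspan scale S = module.span scale S"

definition vindep :: "('k::field \<Rightarrow> 'v::ab_group_add \<Rightarrow> 'v) \<Rightarrow> 'v set \<Rightarrow> bool" where
  "vindep scale S = (\<not> module.dependent scale S)"

definition has_dim :: "('k::field \<Rightarrow> 'v::ab_group_add \<Rightarrow> 'v) \<Rightarrow> nat \<Rightarrow> bool" where
  "has_dim scale d = (\<exists>B. finite B \<and> card B = d \<and> vindep scale B \<and> vspan scale B = UNIV)"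

definition nontrivial_involution :: "('k::field \<Rightarrow> 'k) \<Rightarrow> bool" where
  "nontrivial_involution \<sigma> =
     ((\<forall>a b. \<sigma> (a + b) = \<sigma> a + \<sigma> b) \<and> (\<forall>a b. \<sigma> (a * b) = \<sigma> a * \<sigma> b) \<and>
      (\<forall>a. \<sigma> (\<sigma> a) = a) \<and> \<sigma> \<noteq> id)"

definition nondeg_hermitian ::
  "('k::field \<Rightarrow> 'v::ab_group_add \<Rightarrow> 'v) \<Rightarrow> ('k \<Rightarrow> 'k) \<Rightarrow> ('v \<Rightarrow> 'v \<Rightarrow> 'k) \<Rightarrow> bool" where
  "nondeg_hermitian scale \<sigma> f =
     (nontrivial_involution \<sigma> \<and>
      (\<forall>u u' v. f (u + u') v = f u v + f u' v) \<and>
      (\<forall>a u v. f (scale a u) v = a * f u v) \<and>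
      (\<forall>u v. f v u = \<sigma> (f u v)) \<and>
      (\<forall>v. (\<forall>w. f v w = 0) \<longrightarrow> v = 0))"

definition bilin_of :: "('v::ab_group_add \<Rightarrow> 'k::field) \<Rightarrow> 'v \<Rightarrow> 'v \<Rightarrow> 'k" where
  "bilin_of q u v = q (u + v) - q u - q v"

definition nondeg_quadratic ::
  "('k::field \<Rightarrow> 'v::ab_group_add \<Rightarrow> 'v) \<Rightarrow> ('v \<Rightarrow> 'k) \<Rightarrow> bool" where
  "nondeg_quadratic scale q =
     ((\<forall>a v. q (scale a v) = a * a * q v) \<and>
      (\<forall>u u' v. bilin_of q (u + u') v = bilin_of q u v + bilin_of q u' v) \<and>
      (\<forall>a u v. bilin_of q (scale a u) v = a * bilin_of q u v) \<and>
      (\<forall>v. v \<noteq> 0 \<and> (\<forall>w. bilin_of q v w = 0) \<longrightarrow> q v \<noteq> 0))"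

definition tot_iso :: "('v \<Rightarrow> 'v \<Rightarrow> 'k::zero) \<Rightarrow> 'v set \<Rightarrow> bool" where
  "tot_iso f W = (\<forall>u\<in>W. \<forall>w\<in>W. f u w = 0)"

definition tot_sing :: "('v \<Rightarrow> 'k::zero) \<Rightarrow> 'v set \<Rightarrow> bool" where
  "tot_sing q W = (\<forall>w\<in>W. q w = 0)"

text \<open>In what follows, sing is tot_iso f or tot_sing q; it is only ever applied to subspaces.\<close>

definition witt_index ::
  "('k::field \<Rightarrow> 'v::ab_group_add \<Rightarrow> 'v) \<Rightarrow> ('v set \<Rightarrow> bool) \<Rightarrow> nat \<Rightarrow> bool" where
  "witt_index scale sing n =
     ((\<exists>S. finite S \<and> card S = n \<and> vindep scale S \<and> sing (vspan scale S)) \<and>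
      (\<forall>S. finite S \<and> vindep scale S \<and> sing (vspan scale S) \<longrightarrow> card S \<le> n))"

definition ppoints :: "('k::field \<Rightarrow> 'v::ab_group_add \<Rightarrow> 'v) \<Rightarrow> ('v set \<Rightarrow> bool) \<Rightarrow> 'v set set" where
  "ppoints scale sing = {vspan scale {v} | v. v \<noteq> 0 \<and> sing (vspan scale {v})}"

text \<open>Lines of P: totally isotropic/singular 2-spaces of V; a point p lies on a line L iff p \<subseteq> L\<close>
definition plines :: "('k::field \<Rightarrow> 'v::ab_group_add \<Rightarrow> 'v) \<Rightarrow> ('v set \<Rightarrow> bool) \<Rightarrow> 'v set set" where
  "plines scale sing = {vspan scale S | S. finite S \<and> card S = 2 \<and> vindep scale S \<and> sing (vspan scale S)}"

definition psubspace ::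
  "('k::field \<Rightarrow> 'v::ab_group_add \<Rightarrow> 'v) \<Rightarrow> ('v set \<Rightarrow> bool) \<Rightarrow> 'v set set \<Rightarrow> bool" where
  "psubspace scale sing X =
     (X \<subseteq> ppoints scale sing \<and>
      (\<forall>L\<in>plines scale sing.
         (\<exists>p\<in>X. \<exists>p'\<in>X. p \<noteq> p' \<and> p \<subseteq> L \<and> p' \<subseteq> L) \<longrightarrow>
         (\<forall>r\<in>ppoints scale sing. r \<subseteq> L \<longrightarrow> r \<in> X)))"

definition pcollinear ::
  "('k::field \<Rightarrow> 'v::ab_group_add \<Rightarrow> 'v) \<Rightarrow> ('v set \<Rightarrow> bool) \<Rightarrow> 'v set \<Rightarrow> 'v set \<Rightarrow> bool" where
  "pcollinear scale sing p r = (\<exists>L\<in>plines scale sing. p \<subseteq> L \<and> r \<subseteq> L)"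

definition psingular ::
  "('k::field \<Rightarrow> 'v::ab_group_add \<Rightarrow> 'v) \<Rightarrow> ('v set \<Rightarrow> bool) \<Rightarrow> 'v set set \<Rightarrow> bool" where
  "psingular scale sing S =
     (psubspace scale sing S \<and> (\<forall>p\<in>S. \<forall>r\<in>S. p \<noteq> r \<longrightarrow> pcollinear scale sing p r))"

definition pmax_singular ::
  "('k::field \<Rightarrow> 'v::ab_group_add \<Rightarrow> 'v) \<Rightarrow> ('v set \<Rightarrow> bool) \<Rightarrow> 'v set set \<Rightarrow> bool" where
  "pmax_singular scale sing M =
     (psingular scale sing M \<and> (\<forall>S. psingular scale sing S \<and> M \<subseteq> S \<longrightarrow> S = M))"

definition pnice ::
  "('k::field \<Rightarrow> 'v::ab_group_add \<Rightarrow> 'v) \<Rightarrow> ('v set \<Rightarrow> bool) \<Rightarrow> 'v set set \<Rightarrow> bool" where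
  "pnice scale sing X =
     (psubspace scale sing X \<and>
      (\<exists>M1 M2. pmax_singular scale sing M1 \<and> pmax_singular scale sing M2 \<and>
               M1 \<subseteq> X \<and> M2 \<subseteq> X \<and> M1 \<inter> M2 = {}))"

definition pg_span_points ::
  "('k::field \<Rightarrow> 'v::ab_group_add \<Rightarrow> 'v) \<Rightarrow> 'v set set \<Rightarrow> 'v set set" where
  "pg_span_points scale X = {vspan scale {v} | v. v \<noteq> 0 \<and> v \<in> vspan scale (\<Union>X)}"

end

theory Submission
  imports Defs
begin


locale invol =
  fixes \<sigma> :: "'k::field \<Rightarrow> 'k"
  assumes s_add: "\<sigma> (a + b) = \<sigma> a + \<sigma> b"
    and s_mult: "\<sigma> (a * b) = \<sigma> a * \<sigma> b"
    and s_s[simp]: "\<sigma> (\<sigma> a) = a"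
begin

lemma s0[simp]: "\<sigma> 0 = 0"
proof -
  have "\<sigma> 0 = \<sigma> 0 + \<sigma> 0" using s_add[of 0 0] by simp
  then show ?thesis by (metis add_cancel_right_right)
qed

lemma s_eq0[simp]: "\<sigma> a = 0 \<longleftrightarrow> a = 0"
  by (metis s0 s_s)

lemma s1[simp]: "\<sigma> 1 = 1"
proof -
  have "\<sigma> 1 = \<sigma> 1 * \<sigma> 1" using s_mult[of 1 1] by simp
  moreover have "\<sigma> 1 \<noteq> 0" by simp
  ultimately show ?thesis by (metis mult_cancel_left1)
qed

lemma s_neg[simp]: "\<sigma> (- a) = - \<sigma> a"
proof -
  have "\<sigma> a + \<sigma> (- a) = 0" using s_add[of a "-a"] by simp
  then show ?thesis by (metis add.commute eq_neg_iff_add_eq_0)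
qed

lemma s_diff[simp]: "\<sigma> (a - b) = \<sigma> a - \<sigma> b"
  using s_add[of a "-b"] by simp

lemma s_inv[simp]: "\<sigma> (inverse a) = inverse (\<sigma> a)"
proof (cases "a = 0")
  case False
  have "\<sigma> a * \<sigma> (inverse a) = 1" using s_mult[of a "inverse a"] False by simp
  then show ?thesis by (metis inverse_unique)
qed simp

lemma s_div[simp]: "\<sigma> (a / b) = \<sigma> a / \<sigma> b"
  by (simp add: divide_inverse s_mult)

lemmas s_simps[simp] = s_add s_mult

lemma trace_one:
  assumes "\<sigma> b \<noteq> b"
  shows "\<exists>a0. a0 + \<sigma> a0 = 1"
proof -
  obtain t where t: "t + \<sigma> t \<noteq> 0"
  proof (cases "(1::'k) + 1 = 0")
    case True
    have "b + \<sigma> b \<noteq> 0"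
    proof
      assume "b + \<sigma> b = 0"
      then have "\<sigma> b = - b" by (simp add: eq_neg_iff_add_eq_0 add.commute)
      moreover have "- b = b" using True by (metis add.commute add_eq_0_iff2 distrib_right mult_1 mult_zero_left)
      ultimately show False using assms by simp
    qed
    then show ?thesis using that by blast
  next
    case False
    then show ?thesis using that[of 1] by simp
  qed
  define T where "T = t + \<sigma> t"
  have sT: "\<sigma> T = T" unfolding T_def by (simp add: add.commute)
  have 1: "\<sigma> (t / T) = \<sigma> t / T" using sT by simp
  have "t / T + \<sigma> t / T = (t + \<sigma> t) / T" by (simp add: add_divide_distrib)
  also have "\<dots> = 1" using t unfolding T_def by simp
  finally have "t / T + \<sigma> (t / T) = 1" unfolding 1 .
  then show ?thesis by blast
qed

end

locale sfield = invol \<sigma> for \<sigma> :: "'k::field \<Rightarrow> 'k" +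
  fixes \<delta> :: 'k
  assumes delta: "(\<delta> = 0 \<and> (\<forall>a. \<sigma> a = a)) \<or> (\<delta> = 1 \<and> (\<exists>a0. a0 + \<sigma> a0 = 1))"
begin

definition gc :: "'k \<Rightarrow> 'k \<Rightarrow> 'k \<Rightarrow> 'k \<Rightarrow> 'k \<Rightarrow> 'k \<Rightarrow> 'k \<Rightarrow> 'k \<Rightarrow> 'k" where
  "gc c1 c2 d1 d2 a1 a2 b1 b2 = c1 * \<sigma> b1 + c2 * \<sigma> b2 + d1 * \<sigma> a1 + d2 * \<sigma> a2"

definition Qc :: "'k \<Rightarrow> 'k \<Rightarrow> 'k \<Rightarrow> 'k \<Rightarrow> 'k" where
  "Qc a1 a2 b1 b2 = a1 * \<sigma> b1 + a2 * \<sigma> b2 + \<delta> * (b1 * \<sigma> a1 + b2 * \<sigma> a2)"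

definition plane :: "'k \<Rightarrow> 'k \<Rightarrow> 'k \<Rightarrow> 'k \<Rightarrow> bool" where
  "plane c1 c2 d1 d2 \<longleftrightarrow> (d1 = 0 \<and> d2 = 0) \<or> (c1 = 0 \<and> c2 = 0) \<or> (c2 = 0 \<and> d1 = 0) \<or> (c1 = 0 \<and> d2 = 0)"

definition pclosed :: "('k \<Rightarrow> 'k \<Rightarrow> 'k \<Rightarrow> 'k \<Rightarrow> bool) \<Rightarrow> bool" where
  "pclosed P \<longleftrightarrow> (\<forall>a1 a2 b1 b2 c1 c2 d1 d2. P a1 a2 b1 b2 \<and> plane c1 c2 d1 d2 \<and>
      gc c1 c2 d1 d2 a1 a2 b1 b2 = 0 \<longrightarrow> P (a1 + c1) (a2 + c2) (b1 + d1) (b2 + d2))"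

definition sclosed :: "('k \<Rightarrow> 'k \<Rightarrow> 'k \<Rightarrow> 'k \<Rightarrow> bool) \<Rightarrow> bool" where
  "sclosed P \<longleftrightarrow> (\<forall>a1 a2 b1 b2 c1 c2 d1 d2. P a1 a2 b1 b2 \<and> Qc c1 c2 d1 d2 = 0 \<and>
      gc c1 c2 d1 d2 a1 a2 b1 b2 = 0 \<longrightarrow> P (a1 + c1) (a2 + c2) (b1 + d1) (b2 + d2))"

lemma plane_Qc: "plane c1 c2 d1 d2 \<Longrightarrow> Qc c1 c2 d1 d2 = 0"
  unfolding plane_def Qc_def by auto

lemma sclosed_pclosed: "sclosed P \<Longrightarrow> pclosed P"
  unfolding sclosed_def pclosed_def using plane_Qc by blast

lemma pmv:
  assumes "pclosed P" "P a1 a2 b1 b2" "plane c1 c2 d1 d2" "gc c1 c2 d1 d2 a1 a2 b1 b2 = 0"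
    "a1' = a1 + c1" "a2' = a2 + c2" "b1' = b1 + d1" "b2' = b2 + d2"
  shows "P a1' a2' b1' b2'"
  using assms unfolding pclosed_def by blast

lemma smv:
  assumes "sclosed P" "P a1 a2 b1 b2" "Qc c1 c2 d1 d2 = 0" "gc c1 c2 d1 d2 a1 a2 b1 b2 = 0"
    "a1' = a1 + c1" "a2' = a2 + c2" "b1' = b1 + d1" "b2' = b2 + d2"
  shows "P a1' a2' b1' b2'"
  using assms unfolding sclosed_def by blast

lemma conn_R4:
  assumes P: "pclosed P" and h: "P x 0 y 0"
  shows "P 1 0 (x * \<sigma> y) 0"
proof -
  let ?z = "x * \<sigma> y"
  have 1: "P x 1 y 0"
    by (rule pmv[OF P h, of 0 1 0 0]) (simp_all add: plane_def gc_def)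
  have 2: "P 0 1 y ?z"
    by (rule pmv[OF P 1, of "-x" 0 0 ?z]) (simp_all add: plane_def gc_def)
  have 3: "P 0 1 0 ?z"
    by (rule pmv[OF P 2, of 0 0 "-y" 0]) (simp_all add: plane_def gc_def)
  have 4: "P 1 1 0 ?z"
    by (rule pmv[OF P 3, of 1 0 0 0]) (simp_all add: plane_def gc_def)
  have 5: "P 1 1 ?z 0"
    by (rule pmv[OF P 4, of 0 0 ?z "-?z"]) (simp_all add: plane_def gc_def)
  show ?thesis
    by (rule pmv[OF P 5, of 0 "-1" 0 0]) (simp_all add: plane_def gc_def)
qed

lemma conn1:
  assumes P: "pclosed P" and h: "P x1 x2 y1 y2" and nz: "x1 \<noteq> 0 \<or> x2 \<noteq> 0"
  shows "\<exists>z. P 1 0 z 0"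
proof -
  obtain a1 a2 b1 b2 where A: "P a1 a2 b1 b2" "a1 \<noteq> 0"
  proof (cases "x1 = 0")
    case False then show ?thesis using that h by blast
  next
    case True
    with nz have x2: "x2 \<noteq> 0" by simp
    let ?b = "- \<sigma> y1 / \<sigma> x2"
    have "P 1 x2 y1 (y2 + ?b)"
      by (rule pmv[OF P h, of 1 0 0 ?b]) (use True x2 in \<open>simp_all add: plane_def gc_def\<close>)
    then show ?thesis using that by simp
  qed
  let ?b = "a2 * \<sigma> b2 / \<sigma> a1"
  have B: "P a1 0 (b1 + ?b) b2"
    by (rule pmv[OF P A(1), of 0 "-a2" ?b 0]) (use A(2) in \<open>simp_all add: plane_def gc_def\<close>)
  have C: "P a1 0 (b1 + ?b) 0"
    by (rule pmv[OF P B, of 0 0 0 "-b2"]) (simp_all add: plane_def gc_def)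
  show ?thesis using conn_R4[OF P C] by blast
qed

lemma trace_step:
  assumes P: "sclosed P" and h: "P 1 0 z 0" and eq: "\<sigma> z + \<delta> * z = \<sigma> z' + \<delta> * z'"
  shows "P 1 0 z' 0"
proof -
  define d where "d = z' - z"
  have dd: "\<sigma> d + \<delta> * d = 0" using eq unfolding d_def by (simp add: algebra_simps)
  have dd2: "\<sigma> d + d = 0"
    using delta dd by auto
  have 1: "P 1 1 z 0"
    by (rule smv[OF P h, of 0 1 0 0]) (simp_all add: Qc_def gc_def)
  have 2: "P 1 1 z' (-d)"
    by (rule smv[OF P 1, of 0 0 d "-d"]) (simp_all add: Qc_def gc_def d_def)
  show ?thesis
  proof (rule smv[OF P 2, of 0 "-1" 0 d])
    show "Qc 0 (- 1) 0 d = 0" using dd unfolding Qc_def by (simp; algebra)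
    show "gc 0 (- 1) 0 d 1 1 z' (- d) = 0" using dd2 unfolding gc_def by (simp; algebra)
  qed simp_all
qed

lemma gc_self: "Qc a1 a2 b1 b2 = 0 \<Longrightarrow> gc a1 a2 b1 b2 a1 a2 b1 b2 = 0"
  using delta unfolding Qc_def gc_def by (auto simp: algebra_simps)

lemma Qc_add: "gc c1 c2 d1 d2 a1 a2 b1 b2 = 0 \<Longrightarrow>
   Qc (a1 + c1) (a2 + c2) (b1 + d1) (b2 + d2) = Qc a1 a2 b1 b2 + Qc c1 c2 d1 d2"
proof -
  assume g: "gc c1 c2 d1 d2 a1 a2 b1 b2 = 0"
  then have g2: "\<sigma> (gc c1 c2 d1 d2 a1 a2 b1 b2) = 0" by simp
  show ?thesis using delta
  proof
    assume "\<delta> = 0 \<and> (\<forall>a. \<sigma> a = a)"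
    then have d: "\<delta> = 0" and si: "\<And>a. \<sigma> a = a" by auto
    have g': "c1 * b1 + c2 * b2 + d1 * a1 + d2 * a2 = 0" using g unfolding gc_def si .
    show ?thesis using g' unfolding Qc_def unfolding si d by algebra
  next
    assume "\<delta> = 1 \<and> (\<exists>a0. a0 + \<sigma> a0 = 1)"
    have g3: "\<sigma> c1 * b1 + \<sigma> c2 * b2 + \<sigma> d1 * a1 + \<sigma> d2 * a2 = 0"
      using g2 unfolding gc_def by (simp only: s_add s_mult s_s)
    show ?thesis using g g3 \<open>\<delta> = 1 \<and> _\<close> unfolding Qc_def gc_def
      by (simp; algebra)
  qed
qed

lemma Qc_neg[simp]: "Qc (-a1) (-a2) (-b1) (-b2) = Qc a1 a2 b1 b2"
  unfolding Qc_def by simp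

lemma sclosed_not:
  assumes P: "sclosed P" shows "sclosed (\<lambda>a1 a2 b1 b2. \<not> P a1 a2 b1 b2)"
  unfolding sclosed_def
proof (intro allI impI, elim conjE)
  fix a1 a2 b1 b2 c1 c2 d1 d2
  assume n: "\<not> P a1 a2 b1 b2" and q: "Qc c1 c2 d1 d2 = 0" and g: "gc c1 c2 d1 d2 a1 a2 b1 b2 = 0"
  show "\<not> P (a1 + c1) (a2 + c2) (b1 + d1) (b2 + d2)"
  proof
    assume h: "P (a1 + c1) (a2 + c2) (b1 + d1) (b2 + d2)"
    have gs: "gc c1 c2 d1 d2 c1 c2 d1 d2 = 0" using gc_self[OF q] .
    have "P (a1 + c1 + - c1) (a2 + c2 + - c2) (b1 + d1 + - d1) (b2 + d2 + - d2)"
    proof (rule smv[OF P h, of "-c1" "-c2" "-d1" "-d2"])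
      show "gc (- c1) (- c2) (- d1) (- d2) (a1 + c1) (a2 + c2) (b1 + d1) (b2 + d2) = 0"
        using g gs unfolding gc_def by (simp; algebra)
    qed (use q in simp_all)
    then show False using n by simp
  qed
qed

lemma sclosed_Q:
  assumes P: "sclosed P" shows "sclosed (\<lambda>a1 a2 b1 b2. P a1 a2 b1 b2 \<and> Qc a1 a2 b1 b2 = k)"
  using P Qc_add unfolding sclosed_def by auto

lemma Qc_x0: "Qc 0 0 b1 b2 = 0"
  unfolding Qc_def by simp

lemma conn:
  assumes P: "sclosed P" and h: "P a1 a2 b1 b2" and eq: "Qc a1 a2 b1 b2 = Qc c1 c2 d1 d2"
  shows "P c1 c2 d1 d2"
proof (cases "Qc a1 a2 b1 b2 = 0")
  case True
  have "P (a1 + - a1) (a2 + - a2) (b1 + - b1) (b2 + - b2)"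
  proof (rule smv[OF P h, of "-a1" "-a2" "-b1" "-b2"])
    show "gc (- a1) (- a2) (- b1) (- b2) a1 a2 b1 b2 = 0"
      using gc_self[OF True] unfolding gc_def by (simp; algebra)
  qed (use True in simp_all)
  then have 0: "P 0 0 0 0" by simp
  show ?thesis
    by (rule smv[OF P 0, of c1 c2 d1 d2]) (use True eq in \<open>simp_all add: gc_def\<close>)
next
  case False
  let ?k = "Qc a1 a2 b1 b2"
  have nz1: "a1 \<noteq> 0 \<or> a2 \<noteq> 0" using False Qc_x0 by auto
  have nz2: "c1 \<noteq> 0 \<or> c2 \<noteq> 0" using False Qc_x0 eq by auto
  obtain z where z: "P 1 0 z 0" "Qc 1 0 z 0 = ?k"
    using conn1[OF sclosed_pclosed[OF sclosed_Q[OF P, of ?k]], of a1 a2 b1 b2] h nz1 by auto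
  show ?thesis
  proof (rule ccontr)
    assume n: "\<not> P c1 c2 d1 d2"
    obtain z' where z': "\<not> P 1 0 z' 0" "Qc 1 0 z' 0 = ?k"
      using conn1[OF sclosed_pclosed[OF sclosed_Q[OF sclosed_not[OF P], of ?k]], of c1 c2 d1 d2]
        n nz2 eq by auto
    have "\<sigma> z + \<delta> * z = \<sigma> z' + \<delta> * z'" using z(2) z'(2) unfolding Qc_def by simp
    then show False using trace_step[OF P z(1)] z'(1) by blast
  qed
qed


lemma pclosed_not:
  assumes P: "pclosed P" shows "pclosed (\<lambda>a1 a2 b1 b2. \<not> P a1 a2 b1 b2)"
  unfolding pclosed_def
proof (intro allI impI, elim conjE)
  fix a1 a2 b1 b2 c1 c2 d1 d2
  assume n: "\<not> P a1 a2 b1 b2" and q: "plane c1 c2 d1 d2" and g: "gc c1 c2 d1 d2 a1 a2 b1 b2 = 0"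
  show "\<not> P (a1 + c1) (a2 + c2) (b1 + d1) (b2 + d2)"
  proof
    assume h: "P (a1 + c1) (a2 + c2) (b1 + d1) (b2 + d2)"
    have gs: "gc c1 c2 d1 d2 c1 c2 d1 d2 = 0" using gc_self[OF plane_Qc[OF q]] .
    have "P (a1 + c1 + - c1) (a2 + c2 + - c2) (b1 + d1 + - d1) (b2 + d2 + - d2)"
    proof (rule pmv[OF P h, of "-c1" "-c2" "-d1" "-d2"])
      show "gc (- c1) (- c2) (- d1) (- d2) (a1 + c1) (a2 + c2) (b1 + d1) (b2 + d2) = 0"
        using g gs unfolding gc_def by (simp; algebra)
      show "plane (- c1) (- c2) (- d1) (- d2)" using q unfolding plane_def by auto
    qed simp_all
    then show False using n by simp
  qed
qed

lemma pclosed_Q: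
  assumes P: "pclosed P" shows "pclosed (\<lambda>a1 a2 b1 b2. P a1 a2 b1 b2 \<and> Qc a1 a2 b1 b2 = k)"
  using P Qc_add plane_Qc unfolding pclosed_def by auto

lemma tr_exists: "\<sigma> c = c \<Longrightarrow> \<exists>a. \<sigma> a + \<delta> * a = c"
proof -
  assume c: "\<sigma> c = c"
  show ?thesis using delta
  proof
    assume "\<delta> = 0 \<and> (\<forall>a. \<sigma> a = a)" then show ?thesis by auto
  next
    assume "\<delta> = 1 \<and> (\<exists>a0. a0 + \<sigma> a0 = 1)"
    then obtain a0 where d: "\<delta> = 1" and a0: "a0 + \<sigma> a0 = 1" by blast
    have "\<sigma> (c * a0) + \<delta> * (c * a0) = c * (a0 + \<sigma> a0)" using c d by (simp add: algebra_simps)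
    then have "\<sigma> (c * a0) + \<delta> * (c * a0) = c" using a0 by simp
    then show ?thesis by blast
  qed
qed

end



locale PS = sfield \<sigma> \<delta> + vector_space scale
  for \<sigma> :: "'k::field \<Rightarrow> 'k" and \<delta> :: 'k and scale :: "'k \<Rightarrow> 'v::ab_group_add \<Rightarrow> 'v" (infixr \<open>*s\<close> 75) +
  fixes sing :: "'v set \<Rightarrow> bool" and g :: "'v \<Rightarrow> 'v \<Rightarrow> 'k" and Q :: "'v \<Rightarrow> 'k"
  assumes g_add: "g (u + u') v = g u v + g u' v"
    and g_scale: "g (a *s u) v = a * g u v"
    and g_sym: "g v u = \<sigma> (g u v)"
    and Q_add: "Q (u + v) = Q u + Q v + g u v + \<delta> * g v u"
    and Q_scale: "Q (a *s v) = a * \<sigma> a * Q v"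
    and Q_g: "Q v = 0 \<Longrightarrow> g v v = 0"
    and Q_fix: "\<sigma> (Q v) = Q v"
    and sing_iff: "sing (span A) \<longleftrightarrow> (\<forall>v\<in>span A. Q v = 0) \<and> (\<forall>u\<in>span A. \<forall>v\<in>span A. g u v = 0)"
begin

lemma g_add_r: "g u (v + w) = g u v + g u w"
  by (metis g_add g_sym s_add)

lemma g_scale_r: "g u (a *s v) = \<sigma> a * g u v"
  by (metis g_scale g_sym s_mult s_s)

lemma g_0l[simp]: "g 0 v = 0"
  using g_scale[of 0 v] by simp

lemma g_0r[simp]: "g v 0 = 0"
  using g_scale_r[of v 0] by simp

lemma g_neg_l: "g (- u) v = - g u v"
proof -
  have "g (- u) v + g u v = 0" using g_add[of "-u" u v] by simp
  then show ?thesis by (simp add: eq_neg_iff_add_eq_0)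
qed

lemma g_neg_r: "g u (- v) = - g u v"
  by (metis g_neg_l g_sym s_neg)

lemma g_diff_l: "g (u - w) v = g u v - g w v"
  using g_add[of u "-w" v] g_neg_l[of w v] by simp

lemma g_diff_r: "g u (v - w) = g u v - g u w"
  using g_add_r[of u v "-w"] g_neg_r[of u w] by simp

lemmas g_simps = g_add g_add_r g_scale g_scale_r g_neg_l g_neg_r g_diff_l g_diff_r

lemma g_perp_sym: "g u v = 0 \<longleftrightarrow> g v u = 0"
  using g_sym[of u v] by simp

lemma Q0[simp]: "Q 0 = 0"
  using Q_scale[of 0 0] by simp

lemma Q_neg: "Q (- v) = Q v"
  using Q_scale[of "-1" v] by simp

lemma Q_add_perp: "g u v = 0 \<Longrightarrow> Q (u + v) = Q u + Q v"
proof -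
  assume a: "g u v = 0"
  then have "g v u = 0" using g_perp_sym by blast
  then show ?thesis using a Q_add[of u v] by simp
qed

lemma span2: "x \<in> span {p, r} \<longleftrightarrow> (\<exists>a b. x = a *s p + b *s r)"
proof
  assume "x \<in> span {p, r}"
  then obtain k k' where "x - k *s p = k' *s r" unfolding span_insert span_singleton by auto
  then have "x = k *s p + k' *s r" by (metis add.commute diff_add_cancel)
  then show "\<exists>a b. x = a *s p + b *s r" by blast
next
  assume "\<exists>a b. x = a *s p + b *s r"
  then obtain a b where "x = a *s p + b *s r" by blast
  then show "x \<in> span {p, r}"
    by (simp add: span_add span_scale span_base)
qed

lemma ts_span2:
  assumes "Q p = 0" "Q r = 0" "g p r = 0"
  shows "sing (span {p, r})"
proof -
  have gr: "g r p = 0" using assms(3) g_perp_sym by blast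
  have pp: "g p p = 0" "g r r = 0" using assms Q_g by auto
  have q: "Q (a *s p + b *s r) = 0" for a b
    using assms gr pp by (simp add: Q_add Q_scale g_simps)
  have gg: "g (a *s p + b *s r) (c *s p + d *s r) = 0" for a b c d
    using assms gr pp by (simp add: g_simps)
  show ?thesis unfolding sing_iff by (auto simp: span2 q gg)
qed

lemma sing_sub:
  assumes "sing (span A)" "v \<in> span A"
  shows "Q v = 0"
  using assms sing_iff by auto

lemma sing_sub_g:
  assumes "sing (span A)" "u \<in> span A" "v \<in> span A"
  shows "g u v = 0"
  using assms sing_iff by auto

lemma sing1: "sing (span {v}) \<longleftrightarrow> Q v = 0"
proof
  assume "sing (span {v})" then show "Q v = 0" using sing_sub span_base by blast
next
  assume "Q v = 0" then show "sing (span {v})"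
    using ts_span2[of v v] Q_g by simp
qed

lemma ppointsI: "v \<noteq> 0 \<Longrightarrow> Q v = 0 \<Longrightarrow> span {v} \<in> ppoints scale sing"
  unfolding ppoints_def vspan_def using sing1 by auto

lemma ppointsE:
  assumes "p \<in> ppoints scale sing"
  obtains v where "v \<noteq> 0" "Q v = 0" "p = span {v}"
  using assms unfolding ppoints_def vspan_def using sing1 by auto

lemma span1_eq:
  assumes "w \<in> span {v}" "w \<noteq> 0"
  shows "span {w} = span {v}"
proof -
  obtain k where k: "w = k *s v" using assms(1) span_singleton by auto
  then have "k \<noteq> 0" using assms by auto
  then have "v = inverse k *s w" using k by simp
  then have "v \<in> span {w}" by (metis span_base span_scale singletonI)
  moreover have "w \<in> span {v}" by fact
  ultimately show ?thesis
    using span_minimal[of "{w}" "span {v}"] span_minimal[of "{v}" "span {w}"] by auto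
qed

lemma span1_scale: "c \<noteq> 0 \<Longrightarrow> span {c *s v} = span {v}"
proof (cases "v = 0")
  case False
  assume c: "c \<noteq> 0"
  show ?thesis by (rule span1_eq) (use c False in \<open>auto intro: span_scale span_base\<close>)
qed simp

lemma span1_exch: "x \<noteq> 0 \<Longrightarrow> x \<in> span {y} \<Longrightarrow> y \<in> span {x}"
  using span1_eq[of x y] span_base[of y "{y}"] by auto

lemma ppoint_Q:
  assumes "p \<in> ppoints scale sing" "w \<in> p"
  shows "Q w = 0"
proof -
  obtain v where "v \<noteq> 0" "Q v = 0" "p = span {v}" using assms(1) ppointsE by blast
  then show ?thesis using assms(2) span_singleton Q_scale by auto
qed

lemma indep2:
  assumes "p \<noteq> 0" "r \<notin> span {p}"
  shows "independent {p, r}"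
proof -
  have "r \<noteq> p" using assms(2) span_base[of p "{p}"] by auto
  moreover have "r \<noteq> 0" using assms(2) span_zero by auto
  moreover have "p \<notin> span {r}" using assms span1_exch by blast
  ultimately show ?thesis using assms by (simp add: independent_insert)
qed

lemma indep2_coef:
  assumes "independent {a, b}" "a \<noteq> b" "x *s a + y *s b = 0"
  shows "x = 0 \<and> y = 0"
proof -
  have a0: "a \<noteq> 0" using assms(1) by (metis dependent_zero insertI1)
  have b: "b \<notin> span {a}"
    using assms(1,2) span1_exch by (simp add: independent_insert) blast
  show ?thesis
  proof (cases "y = 0")
    case True then show ?thesis using assms(3) a0 by simp
  next
    case False
    have "y *s b = - (x *s a)" using assms(3) by (simp add: eq_neg_iff_add_eq_0 add.commute)
    then have "b = inverse y *s (- (x *s a))" using False by (metis scale_scale scale_one left_inverse)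
    then have "b \<in> span {a}" by (metis span_base span_scale span_neg singletonI)
    then show ?thesis using b by blast
  qed
qed


definition PX :: "'v set set \<Rightarrow> 'v \<Rightarrow> bool" where
  "PX X v \<longleftrightarrow> (v \<noteq> 0 \<longrightarrow> span {v} \<in> X)"

lemma span1_sub: "v \<in> span A \<Longrightarrow> span {v} \<subseteq> span A"
  using span_minimal[of "{v}" "span A"] by auto

lemma plinesI:
  assumes "p \<noteq> 0" "r \<notin> span {p}" "sing (span {p, r})"
  shows "span {p, r} \<in> plines scale sing"
proof -
  have "r \<noteq> p" using assms(2) span_base[of p "{p}"] by auto
  then have "card {p, r} = 2" by simp
  then show ?thesis unfolding plines_def vspan_def vindep_def
    using indep2[OF assms(1,2)] assms(3) by blast
qed

lemma psubspace_closed: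
  assumes X: "psubspace scale sing X" and L: "L \<in> plines scale sing"
    and p: "p \<in> X" "p \<subseteq> L" and p': "p' \<in> X" "p' \<subseteq> L" "p \<noteq> p'"
    and r: "r \<in> ppoints scale sing" "r \<subseteq> L"
  shows "r \<in> X"
  using assms unfolding psubspace_def by blast

lemma PX_Q:
  assumes X: "psubspace scale sing X" and "PX X v" shows "Q v = 0"
proof (cases "v = 0")
  case False
  then have "span {v} \<in> ppoints scale sing" using assms unfolding PX_def psubspace_def by auto
  then show ?thesis using ppoint_Q span_base by blast
qed simp

lemma line_closure:
  assumes X: "psubspace scale sing X" and q: "Q p = 0" "Q r = 0" and pr: "g p r = 0"
    and P: "PX X p" "PX X r"
  shows "PX X (a *s p + b *s r)"
  unfolding PX_def
proof
  let ?v = "a *s p + b *s r"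
  assume v: "?v \<noteq> 0"
  show "span {?v} \<in> X"
  proof (cases "p = 0")
    case True
    then have "r \<noteq> 0" "b \<noteq> 0" using v by auto
    then show ?thesis using P True unfolding PX_def by (simp add: span1_scale)
  next
    case p0: False
    show ?thesis
    proof (cases "r \<in> span {p}")
      case True
      then have "?v \<in> span {p}" by (simp add: span_add span_scale span_base)
      then have "span {?v} = span {p}" using span1_eq v by blast
      then show ?thesis using P p0 unfolding PX_def by simp
    next
      case False
      then have r0: "r \<noteq> 0" using span_zero by auto
      have sg: "sing (span {p, r})" using ts_span2[OF q pr] .
      have L: "span {p, r} \<in> plines scale sing" using plinesI[OF p0 False sg] .
      have ne: "span {p} \<noteq> span {r}" using False span_base[of r "{r}"] by auto
      have vL: "?v \<in> span {p, r}" using span2 by blast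
      have "span {?v} \<in> ppoints scale sing"
        using ppointsI[OF v] sing_sub[OF sg vL] by blast
      moreover have "span {?v} \<subseteq> span {p, r}" using span1_sub[OF vL] .
      moreover have "span {p} \<subseteq> span {p, r}" "span {r} \<subseteq> span {p, r}" by (simp_all add: span_mono)
      ultimately show ?thesis
        using psubspace_closed[OF X L, of "span {p}" "span {r}" "span {?v}"] P p0 r0 ne
        unfolding PX_def by blast
    qed
  qed
qed


lemma comb2: "c *s (x1 *s a + y1 *s b) + e *s (x2 *s a + y2 *s b) = (c*x1 + e*x2) *s a + (c*y1 + e*y2) *s b"
  by (simp add: algebra_simps)

lemma two_dim:
  assumes ab: "independent {a, b}" "a \<noteq> b"
    and z: "z1 \<in> span {a, b}" "z2 \<in> span {a, b}" "z1 \<noteq> 0" "z2 \<notin> span {z1}"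
    and y: "y \<in> span {a, b}"
  shows "y \<in> span {z1, z2}"
proof -
  obtain \<alpha> \<beta> where z1: "z1 = \<alpha> *s a + \<beta> *s b" using z(1) span2 by blast
  obtain \<gamma> d where z2: "z2 = \<gamma> *s a + d *s b" using z(2) span2 by blast
  define D where "D = \<alpha> * d - \<beta> * \<gamma>"
  have D: "D \<noteq> 0"
  proof
    assume D0: "D = 0"
    show False
    proof (cases "\<alpha> = 0")
      case False
      have e: "(\<gamma>/\<alpha>) * \<alpha> = \<gamma>" "(\<gamma>/\<alpha>) * \<beta> = d" using False D0 unfolding D_def
        by (simp_all add: field_simps)
      have "(\<gamma>/\<alpha>) *s z1 = z2" unfolding z1 z2 using e by (simp add: scale_right_distrib)
      then have "z2 \<in> span {z1}" by (metis span_base span_scale singletonI)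
      then show False using z(4) by blast
    next
      case True
      then have b0: "\<beta> \<noteq> 0" using z(3) z1 by auto
      then have g0: "\<gamma> = 0" using D0 True unfolding D_def by simp
      have "(d/\<beta>) *s z1 = z2" unfolding z1 z2 using True g0 b0 by simp
      then have "z2 \<in> span {z1}" by (metis span_base span_scale singletonI)
      then show False using z(4) by blast
    qed
  qed
  have "(d/D) *s z1 + (- \<beta>/D) *s z2 = ((d/D)*\<alpha> + (- \<beta>/D)*\<gamma>) *s a + ((d/D)*\<beta> + (- \<beta>/D)*d) *s b"
    unfolding z1 z2 by (rule comb2)
  also have "\<dots> = a"
  proof -
    have "(d/D)*\<alpha> + (- \<beta>/D)*\<gamma> = (\<alpha>*d - \<beta>*\<gamma>)/D"
      by (simp add: diff_divide_distrib mult.commute)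
    also have "\<dots> = 1" using D unfolding D_def by simp
    finally have 1: "(d/D)*\<alpha> + (- \<beta>/D)*\<gamma> = 1" .
    have 2: "(d/D)*\<beta> + (- \<beta>/D)*d = 0" by (simp add: mult.commute)
    note 1 2
    then show ?thesis by simp
  qed
  finally have a: "a \<in> span {z1, z2}" by (metis span2)
  have "(- \<gamma>/D) *s z1 + (\<alpha>/D) *s z2 = ((- \<gamma>/D)*\<alpha> + (\<alpha>/D)*\<gamma>) *s a + ((- \<gamma>/D)*\<beta> + (\<alpha>/D)*d) *s b"
    unfolding z1 z2 by (rule comb2)
  also have "\<dots> = b"
  proof -
    have "(- \<gamma>/D)*\<beta> + (\<alpha>/D)*d = (\<alpha>*d - \<beta>*\<gamma>)/D"
      by (simp add: diff_divide_distrib mult.commute)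
    also have "\<dots> = 1" using D unfolding D_def by simp
    finally have 1: "(- \<gamma>/D)*\<beta> + (\<alpha>/D)*d = 1" .
    have 2: "(- \<gamma>/D)*\<alpha> + (\<alpha>/D)*\<gamma> = 0" by (simp add: mult.commute)
    note 1 2
    then show ?thesis by simp
  qed
  finally have b: "b \<in> span {z1, z2}" by (metis span2)
  have "span {a, b} \<subseteq> span {z1, z2}" using a b span_minimal[of "{a,b}" "span {z1, z2}"] by auto
  then show ?thesis using y by blast
qed

lemma psingular_sub: "psingular scale sing M \<Longrightarrow> psubspace scale sing M"
  unfolding psingular_def by blast

lemma TM_g:
  assumes M: "psingular scale sing M" and u: "PX M u" and v: "PX M v"
  shows "g u v = 0"
proof (cases "u = 0 \<or> v = 0")
  case True then show ?thesis by auto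
next
  case False
  then have pu: "span {u} \<in> M" and pv: "span {v} \<in> M" using u v unfolding PX_def by auto
  have Qu: "Q u = 0" using PX_Q[OF psingular_sub[OF M] u] .
  show ?thesis
  proof (cases "span {u} = span {v}")
    case True
    then have "v \<in> span {u}" using span_base[of v "{v}"] by auto
    then obtain k where "v = k *s u" using span_singleton by auto
    then show ?thesis using Q_g[OF Qu] by (simp add: g_scale_r)
  next
    case False
    then obtain L where L: "L \<in> plines scale sing" "span {u} \<subseteq> L" "span {v} \<subseteq> L"
      using M pu pv unfolding psingular_def pcollinear_def by blast
    then obtain S where S: "L = span S" "sing (span S)" unfolding plines_def vspan_def by blast
    have "u \<in> span S" "v \<in> span S" using L S span_base by auto
    then show ?thesis using sing_sub_g[OF S(2)] by blast
  qed
qed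

lemma TM_comb:
  assumes M: "psingular scale sing M" and u: "PX M u" and v: "PX M v"
  shows "PX M (a *s u + b *s v)"
  using line_closure[OF psingular_sub[OF M] PX_Q[OF psingular_sub[OF M] u] PX_Q[OF psingular_sub[OF M] v]
      TM_g[OF M u v] u v] .

lemma TM_add:
  assumes M: "psingular scale sing M" and u: "PX M u" and v: "PX M v"
  shows "PX M (u + v)"
  using TM_comb[OF M u v, of 1 1] by simp

lemma TM_scale:
  assumes M: "psingular scale sing M" and u: "PX M u"
  shows "PX M (a *s u)"
  using TM_comb[OF M u u, of a 0] by simp

lemma PX_0[simp]: "PX X 0"
  unfolding PX_def by simp

lemma TM_max:
  assumes M: "pmax_singular scale sing M" and Qv: "Q v = 0" and perp: "\<And>s. PX M s \<Longrightarrow> g v s = 0"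
  shows "PX M v"
proof -
  have Ms: "psingular scale sing M" using M unfolding pmax_singular_def by blast
  note Msub = psingular_sub[OF Ms]
  define T' where "T' = {w + c *s v | w c. PX M w}"
  define M' where "M' = {span {z} | z. z \<in> T' \<and> z \<noteq> 0}"
  have T'_add: "z + z' \<in> T'" if zT: "z \<in> T'" "z' \<in> T'" for z z'
  proof -
    obtain w c where "z = w + c *s v" "PX M w" using zT(1) unfolding T'_def by blast
    moreover obtain w' c' where "z' = w' + c' *s v" "PX M w'" using zT(2) unfolding T'_def by blast
    ultimately
    show ?thesis unfolding T'_def
      by (intro CollectI exI[of _ "w + w'"] exI[of _ "c + c'"])
        (simp add: TM_add[OF Ms] algebra_simps)
  qed
  have T'_scale: "a *s z \<in> T'" if zT: "z \<in> T'" for z a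
  proof -
    obtain w c where "z = w + c *s v" "PX M w" using zT unfolding T'_def by blast
    then show ?thesis unfolding T'_def
      by (intro CollectI exI[of _ "a *s w"] exI[of _ "a * c"])
        (simp add: TM_scale[OF Ms] algebra_simps)
  qed
  have gvv: "g v v = 0" using Q_g[OF Qv] .
  have T'_Q: "Q z = 0" if zT: "z \<in> T'" for z
  proof -
    obtain w c where z: "z = w + c *s v" "PX M w" using zT unfolding T'_def by blast
    have "g v w = 0" using perp z(2) .
    then have "g w v = 0" using g_perp_sym by blast
    then show ?thesis using z Qv \<open>g v w = 0\<close> PX_Q[OF Msub z(2)]
      by (simp add: Q_add Q_scale g_simps)
  qed
  have T'_g: "g z z' = 0" if zT: "z \<in> T'" "z' \<in> T'" for z z'
  proof -
    obtain w c where z12: "z = w + c *s v" "PX M w" using zT(1) unfolding T'_def by blast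
    obtain w' c' where z34: "z' = w' + c' *s v" "PX M w'" using zT(2) unfolding T'_def by blast
    note z = z12 z34
    have "g v w' = 0" using perp z(4) .
    moreover have "g v w = 0" using perp z(2) .
    then have "g w v = 0" using g_perp_sym by blast
    moreover have "g w w' = 0" using TM_g[OF Ms z(2) z(4)] .
    ultimately show ?thesis using z gvv by (simp add: g_simps)
  qed
  have T'_span2: "y \<in> T'" if "y \<in> span {z1, z2}" "z1 \<in> T'" "z2 \<in> T'" for y z1 z2
    using that T'_add T'_scale span2 by auto
  have M'pts: "M' \<subseteq> ppoints scale sing" unfolding M'_def using ppointsI T'_Q by auto
  have M'sub: "psubspace scale sing M'"
    unfolding psubspace_def
  proof (intro conjI M'pts ballI impI)
    fix L r assume L: "L \<in> plines scale sing"
      and ex: "\<exists>p\<in>M'. \<exists>p'\<in>M'. p \<noteq> p' \<and> p \<subseteq> L \<and> p' \<subseteq> L"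
      and r: "r \<in> ppoints scale sing" "r \<subseteq> L"
    obtain p p' where pp: "p \<in> M'" "p' \<in> M'" "p \<noteq> p'" "p \<subseteq> L" "p' \<subseteq> L" using ex by blast
    obtain z1 where z1: "p = span {z1}" "z1 \<in> T'" "z1 \<noteq> 0" using pp(1) unfolding M'_def by blast
    obtain z2 where z2: "p' = span {z2}" "z2 \<in> T'" "z2 \<noteq> 0" using pp(2) unfolding M'_def by blast
    obtain S where S: "L = span S" "finite S" "card S = 2" "independent S"
      using L unfolding plines_def vspan_def vindep_def by blast
    obtain a b where ab: "S = {a, b}" "a \<noteq> b" using S(3) by (meson card_2_iff)
    have z2n: "z2 \<notin> span {z1}" using span1_eq[of z2 z1] z1 z2 pp(3) by auto
    obtain y where y: "y \<noteq> 0" "r = span {y}" using r(1) ppointsE by metis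
    have "z1 \<in> span {a, b}" "z2 \<in> span {a, b}" "y \<in> span {a, b}"
      using pp z1 z2 S ab r y span_base by auto
    then have "y \<in> span {z1, z2}" using two_dim[of a b] S(4) ab z1(3) z2n by auto
    then have "y \<in> T'" using T'_span2 z1 z2 by blast
    then show "r \<in> M'" unfolding M'_def using y by blast
  qed
  have M'sing: "psingular scale sing M'"
    unfolding psingular_def
  proof (intro conjI M'sub ballI impI)
    fix p r assume p: "p \<in> M'" and r: "r \<in> M'" and ne: "p \<noteq> r"
    obtain z1 where z1: "p = span {z1}" "z1 \<in> T'" "z1 \<noteq> 0" using p unfolding M'_def by blast
    obtain z2 where z2: "r = span {z2}" "z2 \<in> T'" "z2 \<noteq> 0" using r unfolding M'_def by blast
    have z2n: "z2 \<notin> span {z1}" using span1_eq[of z2 z1] z1 z2 ne by auto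
    have "sing (span {z1, z2})" using ts_span2 T'_Q T'_g z1 z2 by blast
    then have "span {z1, z2} \<in> plines scale sing" using plinesI z1(3) z2n by blast
    moreover have "p \<subseteq> span {z1, z2}" "r \<subseteq> span {z1, z2}" using z1 z2 by (simp_all add: span_mono)
    ultimately show "pcollinear scale sing p r" unfolding pcollinear_def by blast
  qed
  have MM': "M \<subseteq> M'"
  proof
    fix q assume q: "q \<in> M"
    then have "q \<in> ppoints scale sing" using Msub unfolding psubspace_def by blast
    then obtain w where w: "w \<noteq> 0" "q = span {w}" using ppointsE by metis
    then have "PX M w" using q unfolding PX_def by simp
    then have "w \<in> T'" unfolding T'_def by (intro CollectI exI[of _ w] exI[of _ 0]) simp
    then show "q \<in> M'" unfolding M'_def using w by blast
  qed
  have "M' = M" using M M'sing MM' unfolding pmax_singular_def by blast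
  moreover have "v \<in> T'" unfolding T'_def by (intro CollectI exI[of _ 0] exI[of _ 1]) simp
  ultimately show ?thesis unfolding PX_def M'_def by blast
qed

end



locale PSH = PS +
  fixes X and e1 e2 f1 f2
  assumes Xsub: "psubspace scale sing X"
    and Eok: "\<And>a1 a2. PX X (a1 *s e1 + a2 *s e2)"
    and Fok: "\<And>b1 b2. PX X (b1 *s f1 + b2 *s f2)"
    and Qef: "Q e1 = 0" "Q e2 = 0" "Q f1 = 0" "Q f2 = 0"
    and gef: "g e1 e2 = 0" "g f1 f2 = 0" "g e1 f2 = 0" "g e2 f1 = 0" "g e1 f1 = 1" "g e2 f2 = 1"
begin

lemma gef2: "g e1 e1 = 0" "g e2 e2 = 0" "g f1 f1 = 0" "g f2 f2 = 0"
  "g e2 e1 = 0" "g f2 f1 = 0" "g f2 e1 = 0" "g f1 e2 = 0" "g f1 e1 = 1" "g f2 e2 = 1"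
  using Q_g Qef gef g_sym[of e2 e1] g_sym[of f2 f1] g_sym[of f2 e1] g_sym[of f1 e2]
    g_sym[of f1 e1] g_sym[of f2 e2] by simp_all

lemmas gtab = gef gef2

definition vec where
  "vec a1 a2 b1 b2 = a1 *s e1 + a2 *s e2 + b1 *s f1 + b2 *s f2"

lemma g_vec: "g (vec c1 c2 d1 d2) (vec a1 a2 b1 b2) = gc c1 c2 d1 d2 a1 a2 b1 b2"
  unfolding vec_def gc_def by (simp add: g_simps gtab)

lemma Q_vec: "Q (vec a1 a2 b1 b2) = Qc a1 a2 b1 b2"
  unfolding vec_def Qc_def by (simp add: Q_add Q_scale g_simps gtab Qef; algebra)

lemma vec_add: "vec a1 a2 b1 b2 + vec c1 c2 d1 d2 = vec (a1 + c1) (a2 + c2) (b1 + d1) (b2 + d2)"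
  unfolding vec_def by (simp add: algebra_simps)

lemma vec_scale: "c *s vec a1 a2 b1 b2 = vec (c * a1) (c * a2) (c * b1) (c * b2)"
  unfolding vec_def by (simp add: algebra_simps)

lemma vec0[simp]: "vec 0 0 0 0 = 0"
  unfolding vec_def by simp

lemma vec_e1: "e1 = vec 1 0 0 0" and vec_e2: "e2 = vec 0 1 0 0"
  and vec_f1: "f1 = vec 0 0 1 0" and vec_f2: "f2 = vec 0 0 0 1"
  unfolding vec_def by simp_all

lemma g_vec_coords:
  "g (vec a1 a2 b1 b2) e1 = b1" "g (vec a1 a2 b1 b2) e2 = b2"
  "g (vec a1 a2 b1 b2) f1 = a1" "g (vec a1 a2 b1 b2) f2 = a2"
  unfolding vec_def by (simp_all add: g_simps gtab)

definition Hperp where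
  "Hperp u \<longleftrightarrow> g u e1 = 0 \<and> g u e2 = 0 \<and> g u f1 = 0 \<and> g u f2 = 0"

lemma Hperp_vec:
  assumes "Hperp u"
  shows "g u (vec a1 a2 b1 b2) = 0" "g (vec a1 a2 b1 b2) u = 0"
proof -
  show 1: "g u (vec a1 a2 b1 b2) = 0" using assms unfolding Hperp_def vec_def by (simp add: g_simps)
  then show "g (vec a1 a2 b1 b2) u = 0" using g_perp_sym by blast
qed

lemma Hperp_Q: "Hperp u \<Longrightarrow> Q (vec a1 a2 b1 b2 + u) = Qc a1 a2 b1 b2 + Q u"
  using Q_add_perp[OF Hperp_vec(2)] Q_vec by simp

lemma Hperp_nz:
  assumes "Hperp u" "vec a1 a2 b1 b2 + u = 0"
  shows "u = 0"
proof -
  have u: "u = - vec a1 a2 b1 b2" using assms(2) by (simp add: eq_neg_iff_add_eq_0 add.commute)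
  have "a1 = 0" "a2 = 0" "b1 = 0" "b2 = 0"
    using assms(1) unfolding Hperp_def u by (simp_all add: g_neg_l g_vec_coords)
  then show ?thesis using u by simp
qed

lemma Hperp_add: "Hperp u \<Longrightarrow> Hperp v \<Longrightarrow> Hperp (u + v)"
  unfolding Hperp_def by (simp add: g_add)

lemma Hperp_scale: "Hperp u \<Longrightarrow> Hperp (c *s u)"
  unfolding Hperp_def by (simp add: g_scale)

lemma PX_e1: "PX X e1" using Eok[of 1 0] by simp
lemma PX_e2: "PX X e2" using Eok[of 0 1] by simp
lemma PX_f1: "PX X f1" using Fok[of 1 0] by simp
lemma PX_f2: "PX X f2" using Fok[of 0 1] by simp

lemma plane_PX: "plane c1 c2 d1 d2 \<Longrightarrow> PX X (vec c1 c2 d1 d2)"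
proof (unfold plane_def, elim disjE conjE)
  assume "d1 = 0" "d2 = 0" then show ?thesis using Eok unfolding vec_def by simp
next
  assume "c1 = 0" "c2 = 0" then show ?thesis using Fok unfolding vec_def by simp
next
  assume "c2 = 0" "d1 = 0"
  then show ?thesis using line_closure[OF Xsub Qef(1) Qef(4) gef(3) PX_e1 PX_f2, of c1 d2]
    unfolding vec_def by simp
next
  assume "c1 = 0" "d2 = 0"
  then show ?thesis using line_closure[OF Xsub Qef(2) Qef(3) gef(4) PX_e2 PX_f1, of c2 d1]
    unfolding vec_def by (simp add: add.commute)
qed

lemma K_PX:
  assumes "a1 * \<sigma> b1 + a2 * \<sigma> b2 = 0"
  shows "PX X (vec a1 a2 b1 b2)"
proof -
  let ?p = "a1 *s e1 + a2 *s e2" and ?r = "b1 *s f1 + b2 *s f2"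
  have "g ?p ?r = 0" using assms by (simp add: g_simps gtab mult.commute)
  from line_closure[OF Xsub PX_Q[OF Xsub Eok] PX_Q[OF Xsub Fok] this Eok Fok, of 1 1]
  show ?thesis unfolding vec_def by (simp add: add.assoc)
qed

lemma pclosed_X: "pclosed (\<lambda>a1 a2 b1 b2. PX X (vec a1 a2 b1 b2))"
  unfolding pclosed_def
proof (intro allI impI, elim conjE)
  fix a1 a2 b1 b2 c1 c2 d1 d2
  assume P: "PX X (vec a1 a2 b1 b2)" and pl: "plane c1 c2 d1 d2" and gg: "gc c1 c2 d1 d2 a1 a2 b1 b2 = 0"
  have "g (vec a1 a2 b1 b2) (vec c1 c2 d1 d2) = 0"
    using gg g_vec[of c1 c2 d1 d2 a1 a2 b1 b2] g_perp_sym by metis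
  from line_closure[OF Xsub PX_Q[OF Xsub P] PX_Q[OF Xsub plane_PX[OF pl]] this P plane_PX[OF pl], of 1 1]
  show "PX X (vec (a1 + c1) (a2 + c2) (b1 + d1) (b2 + d2))" by (simp add: vec_add)
qed


lemma singH:
  assumes Q0: "Qc a1 a2 b1 b2 = 0"
  shows "PX X (vec a1 a2 b1 b2)"
proof (rule ccontr)
  assume n: "\<not> PX X (vec a1 a2 b1 b2)"
  let ?N = "\<lambda>a1 a2 b1 b2. \<not> PX X (vec a1 a2 b1 b2) \<and> Qc a1 a2 b1 b2 = 0"
  have N: "pclosed ?N" using pclosed_Q[OF pclosed_not[OF pclosed_X]] .
  show False
  proof (cases "a1 = 0 \<and> a2 = 0")
    case True
    then show False using n Fok[of b1 b2] unfolding vec_def by simp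
  next
    case False
    then obtain z where z: "?N 1 0 z 0" using conn1[OF N, of a1 a2 b1 b2] n Q0 by auto
    then have zq: "\<sigma> z + \<delta> * z = 0" unfolding Qc_def by simp
    show False
    proof (cases "z = 0")
      case True
      then show False using z K_PX[of 1 0 0 0] by simp
    next
      case z0: False
      have "\<delta> = 1 \<and> (\<exists>a0. a0 + \<sigma> a0 = 1)"
        using delta zq z0 by auto
      then obtain a0 where d1: "\<delta> = 1" and a0: "a0 + \<sigma> a0 = 1" by blast
      have sz: "\<sigma> z = - z" using zq d1 by (simp add: eq_neg_iff_add_eq_0)
      define s where "s = - a0"
      have ss: "s + \<sigma> s = -1" unfolding s_def using a0 by (simp add: algebra_simps)
      have Pk: "PX X (vec 1 1 z (- z))" by (rule K_PX) simp
      have Pm: "PX X (vec (1 + s) s (z + s * z) (- (s * z)))"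
      proof (rule K_PX)
        have "(1 + s) * \<sigma> (z + s * z) + s * \<sigma> (- (s * z)) = \<sigma> z * (1 + (s + \<sigma> s))"
          by (simp add: algebra_simps)
        then show "(1 + s) * \<sigma> (z + s * z) + s * \<sigma> (- (s * z)) = 0" using ss by simp
      qed
      have gmk: "g (vec (1 + s) s (z + s * z) (- (s * z))) (vec 1 1 z (- z)) = 0"
        unfolding g_vec gc_def using sz by (simp add: algebra_simps)
      from line_closure[OF Xsub PX_Q[OF Xsub Pm] PX_Q[OF Xsub Pk] gmk Pm Pk, of 1 "- s"]
      have "PX X (vec 1 0 z 0)" by (simp add: vec_scale vec_add algebra_simps)
      then show False using z by simp
    qed
  qed
qed

lemma stepA:
  assumes u: "Hperp u" "u \<noteq> 0" and k0: "span {vec a1 a2 b1 b2 + u} \<in> X"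
    and eq: "Qc a1 a2 b1 b2 = Qc c1 c2 d1 d2"
  shows "span {vec c1 c2 d1 d2 + u} \<in> X"
proof -
  let ?P = "\<lambda>a1 a2 b1 b2. PX X (vec a1 a2 b1 b2 + u)"
  have P: "sclosed ?P"
    unfolding sclosed_def
  proof (intro allI impI, elim conjE)
    fix a1 a2 b1 b2 c1 c2 d1 d2
    assume Pa: "?P a1 a2 b1 b2" and q: "Qc c1 c2 d1 d2 = 0" and gg: "gc c1 c2 d1 d2 a1 a2 b1 b2 = 0"
    have g1: "g (vec a1 a2 b1 b2) (vec c1 c2 d1 d2) = 0"
      using gg g_vec[of c1 c2 d1 d2 a1 a2 b1 b2] g_perp_sym by metis
    have gpr: "g (vec a1 a2 b1 b2 + u) (vec c1 c2 d1 d2) = 0"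
      using g1 Hperp_vec(1)[OF u(1)] by (simp add: g_add)
    have Qr: "Q (vec c1 c2 d1 d2) = 0" using q Q_vec by simp
    from line_closure[OF Xsub PX_Q[OF Xsub Pa] Qr gpr Pa singH[OF q], of 1 1]
    show "?P (a1 + c1) (a2 + c2) (b1 + d1) (b2 + d2)"
      by (simp add: vec_add[symmetric] algebra_simps)
  qed
  have "?P a1 a2 b1 b2" using k0 unfolding PX_def by simp
  then have "?P c1 c2 d1 d2" using conn[OF P _ eq] by blast
  moreover have "vec c1 c2 d1 d2 + u \<noteq> 0" using Hperp_nz u by blast
  ultimately show ?thesis unfolding PX_def by blast
qed

definition realized where
  "realized u \<longleftrightarrow> Hperp u \<and> (u \<noteq> 0 \<longrightarrow> (\<exists>a1 a2 b1 b2. span {vec a1 a2 b1 b2 + u} \<in> X))"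

lemma stepA':
  assumes r: "realized u" and u0: "u \<noteq> 0" and q: "Q (vec c1 c2 d1 d2 + u) = 0"
  shows "span {vec c1 c2 d1 d2 + u} \<in> X"
proof -
  obtain a1 a2 b1 b2 where k0: "span {vec a1 a2 b1 b2 + u} \<in> X" and hp: "Hperp u"
    using r u0 unfolding realized_def by blast
  have "PX X (vec a1 a2 b1 b2 + u)" using k0 unfolding PX_def by simp
  then have "Q (vec a1 a2 b1 b2 + u) = 0" using PX_Q[OF Xsub] by blast
  then have "Qc a1 a2 b1 b2 + Q u = Qc c1 c2 d1 d2 + Q u" using q Hperp_Q[OF hp] by simp
  then have "Qc a1 a2 b1 b2 = Qc c1 c2 d1 d2" by simp
  then show ?thesis using stepA[OF hp u0 k0] by blast
qed

lemma realized_0: "realized 0"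
  unfolding realized_def Hperp_def by simp

lemma realized_add:
  assumes r1: "realized u1" and r2: "realized u2"
  shows "realized (u1 + u2)"
proof (cases "u1 = 0 \<or> u2 = 0 \<or> u1 + u2 = 0")
  case True
  then show ?thesis using r1 r2 realized_0 by auto
next
  case False
  have h1: "Hperp u1" and h2: "Hperp u2" using r1 r2 unfolding realized_def by auto
  obtain \<alpha> where al: "\<sigma> \<alpha> + \<delta> * \<alpha> = - Q u1" using tr_exists[of "- Q u1"] Q_fix by auto
  obtain \<alpha>' where al': "\<sigma> \<alpha>' + \<delta> * \<alpha>' = - Q u2" using tr_exists[of "- Q u2"] Q_fix by auto
  define t where "t = \<sigma> (- g u1 u2)"
  let ?x1 = "vec 1 0 \<alpha> 0 + u1" and ?x2 = "vec 0 1 t \<alpha>' + u2"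
  have q1: "Q ?x1 = 0" using Hperp_Q[OF h1] al unfolding Qc_def by simp
  have q2: "Q ?x2 = 0" using Hperp_Q[OF h2] al' unfolding Qc_def by simp
  have x1: "span {?x1} \<in> X" using stepA'[OF r1 _ q1] False by blast
  have x2: "span {?x2} \<in> X" using stepA'[OF r2 _ q2] False by blast
  have P1: "PX X ?x1" using x1 unfolding PX_def by simp
  have P2: "PX X ?x2" using x2 unfolding PX_def by simp
  have g12: "g ?x1 ?x2 = 0"
    using Hperp_vec[OF h1] Hperp_vec[OF h2]
    by (simp add: g_add g_add_r g_vec gc_def t_def)
  have e: "vec 1 0 \<alpha> 0 + vec 0 1 t \<alpha>' = vec 1 1 (\<alpha> + t) \<alpha>'" by (simp add: vec_add)
  have e2: "1 *s ?x1 + 1 *s ?x2 = vec 1 1 (\<alpha> + t) \<alpha>' + (u1 + u2)"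
    by (simp add: e[symmetric] algebra_simps)
  from line_closure[OF Xsub q1 q2 g12 P1 P2, of 1 1]
  have "PX X (vec 1 1 (\<alpha> + t) \<alpha>' + (u1 + u2))" unfolding e2 .
  moreover have "vec 1 1 (\<alpha> + t) \<alpha>' + (u1 + u2) \<noteq> 0" using Hperp_nz[OF Hperp_add[OF h1 h2]] False by blast
  ultimately show ?thesis unfolding realized_def PX_def using Hperp_add[OF h1 h2] by blast
qed

lemma realized_scale:
  assumes r: "realized u" shows "realized (c *s u)"
proof (cases "c = 0 \<or> u = 0")
  case True then show ?thesis using realized_0 by auto
next
  case False
  obtain a1 a2 b1 b2 where k: "span {vec a1 a2 b1 b2 + u} \<in> X" and h: "Hperp u"
    using r False unfolding realized_def by blast
  have "vec (c * a1) (c * a2) (c * b1) (c * b2) + c *s u = c *s (vec a1 a2 b1 b2 + u)"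
    by (simp add: vec_scale scale_right_distrib)
  then have "span {vec (c * a1) (c * a2) (c * b1) (c * b2) + c *s u} = span {vec a1 a2 b1 b2 + u}"
    using span1_scale False by simp
  then show ?thesis using k Hperp_scale[OF h] unfolding realized_def by metis
qed

definition uu where "uu x = x - vec (g x f1) (g x f2) (g x e1) (g x e2)"

lemma uu_Hperp: "Hperp (uu x)"
  unfolding Hperp_def uu_def by (simp add: g_diff_l g_vec_coords)

lemma uu_add: "uu (x + y) = uu x + uu y"
proof -
  have "vec (g (x + y) f1) (g (x + y) f2) (g (x + y) e1) (g (x + y) e2) =
    vec (g x f1) (g x f2) (g x e1) (g x e2) + vec (g y f1) (g y f2) (g y e1) (g y e2)"
    by (simp add: g_add vec_add)
  then show ?thesis unfolding uu_def by (simp add: algebra_simps)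
qed

lemma uu_scale: "uu (c *s x) = c *s uu x"
  unfolding uu_def by (simp add: g_scale vec_scale scale_right_diff_distrib)

lemma uu_0: "uu 0 = 0"
  unfolding uu_def by simp

lemma uu_decomp: "x = vec (g x f1) (g x f2) (g x e1) (g x e2) + uu x"
  unfolding uu_def by simp

lemma realized_span:
  assumes x: "x \<in> span (\<Union>X)"
  shows "realized (uu x)"
proof -
  have sub: "subspace {x. realized (uu x)}"
    unfolding subspace_def using uu_0 realized_0 uu_add realized_add uu_scale realized_scale by auto
  have base: "realized (uu v)" if v: "v \<in> \<Union>X" for v
  proof (cases "uu v = 0")
    case True then show ?thesis using realized_0 by simp
  next
    case False
    then have v0: "v \<noteq> 0" using uu_0 by auto
    obtain p where p: "p \<in> X" "v \<in> p" using v by blast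
    then have "p \<in> ppoints scale sing" using Xsub unfolding psubspace_def by blast
    then obtain w where w: "w \<noteq> 0" "p = span {w}" using ppointsE by metis
    have "span {v} = p" using span1_eq[of v w] p w v0 by simp
    then have "span {vec (g v f1) (g v f2) (g v e1) (g v e2) + uu v} \<in> X"
      using p uu_decomp[of v] by simp
    then show ?thesis using uu_Hperp unfolding realized_def by blast
  qed
  show ?thesis using span_induct[OF x sub] base by blast
qed

theorem main_H:
  assumes x: "x \<in> span (\<Union>X)" and x0: "x \<noteq> 0" and q: "Q x = 0"
  shows "span {x} \<in> X"
proof (cases "uu x = 0")
  case True
  then have xe: "x = vec (g x f1) (g x f2) (g x e1) (g x e2)" using uu_decomp[of x] by simp
  then have "Qc (g x f1) (g x f2) (g x e1) (g x e2) = 0" using q Q_vec by metis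
  then have "PX X x" using singH xe by metis
  then show ?thesis using x0 unfolding PX_def by blast
next
  case False
  have "Q (vec (g x f1) (g x f2) (g x e1) (g x e2) + uu x) = 0" using q uu_decomp[of x] by simp
  from stepA'[OF realized_span[OF x] False this] show ?thesis using uu_decomp[of x] by simp
qed

end



context PS
begin

lemma indep2_props:
  assumes "independent {a, b}" "a \<noteq> b"
  shows "a \<noteq> 0" "b \<notin> span {a}"
proof -
  show "a \<noteq> 0" using assms(1) by (metis dependent_zero insertI1)
  show "b \<notin> span {a}"
    using assms(1,2) span1_exch by (simp add: independent_insert) blast
qed

lemma PX_mono: "M \<subseteq> X \<Longrightarrow> PX M v \<Longrightarrow> PX X v"
  unfolding PX_def by blast

lemma dual_vec:
  assumes M1: "pmax_singular scale sing M1" and M2: "pmax_singular scale sing M2"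
    and disj: "M1 \<inter> M2 = {}"
    and e: "PX M1 e" "e \<noteq> 0" and e': "PX M1 e'" "e' \<notin> span {e}"
  shows "\<exists>f. PX M2 f \<and> g f e = 1 \<and> g f e' = 0"
proof -
  have Ms1: "psingular scale sing M1" using M1 unfolding pmax_singular_def by blast
  have Ms2: "psingular scale sing M2" using M2 unfolding pmax_singular_def by blast
  have V: "\<exists>y. PX M2 y \<and> g y m \<noteq> 0" if m: "PX M1 m" "m \<noteq> 0" for m
  proof (rule ccontr)
    assume "\<not> (\<exists>y. PX M2 y \<and> g y m \<noteq> 0)"
    then have "\<And>y. PX M2 y \<Longrightarrow> g m y = 0" using g_perp_sym by blast
    moreover have "Q m = 0" using PX_Q[OF psingular_sub[OF Ms1] m(1)] .
    ultimately have "PX M2 m" using TM_max[OF M2] by blast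
    then show False using m disj unfolding PX_def by blast
  qed
  have e'0: "e' \<noteq> 0" using e'(2) span_zero by auto
  obtain y0 where y0: "PX M2 y0" "g y0 e' \<noteq> 0" using V[OF e'(1) e'0] by blast
  show ?thesis
  proof (cases "\<exists>y. PX M2 y \<and> g y e' = 0 \<and> g y e \<noteq> 0")
    case True
    then obtain y where y: "PX M2 y" "g y e' = 0" "g y e \<noteq> 0" by blast
    let ?f = "inverse (g y e) *s y"
    have "PX M2 ?f" using TM_scale[OF Ms2 y(1)] .
    moreover have "g ?f e = 1" "g ?f e' = 0" using y by (simp_all add: g_scale)
    ultimately show ?thesis by blast
  next
    case False
    define lam where "lam = g y0 e / g y0 e'"
    define m where "m = 1 *s e + (- \<sigma> lam) *s e'"
    have Pm: "PX M1 m" unfolding m_def using TM_comb[OF Ms1 e(1) e'(1)] .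
    have m0: "m \<noteq> 0"
    proof
      assume "m = 0"
      then have ee: "e = \<sigma> lam *s e'" unfolding m_def by (simp add: eq_neg_iff_add_eq_0[symmetric])
      then have "\<sigma> lam \<noteq> 0" using e(2) by auto
      then have "e' = inverse (\<sigma> lam) *s e" using ee by simp
      then have "e' \<in> span {e}" by (metis span_base span_scale singletonI)
      then show False using e'(2) by blast
    qed
    have "g y m = 0" if y: "PX M2 y" for y
    proof -
      let ?c = "g y e' / g y0 e'"
      have Py': "PX M2 (1 *s y + (- ?c) *s y0)" using TM_comb[OF Ms2 y y0(1)] .
      have "g (1 *s y + (- ?c) *s y0) e' = 0" using y0(2) by (simp add: g_simps)
      then have "g (1 *s y + (- ?c) *s y0) e = 0" using False Py' by blast
      then have "g y e = ?c * g y0 e" by (simp add: g_simps)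
      then show ?thesis unfolding m_def lam_def by (simp add: g_simps)
    qed
    then show ?thesis using V[OF Pm m0] by blast
  qed
qed

lemma frame:
  assumes M1: "pmax_singular scale sing M1" and M2: "pmax_singular scale sing M2"
    and disj: "M1 \<inter> M2 = {}"
    and ab: "independent {a, b}" "a \<noteq> b" and sab: "sing (span {a, b})"
  shows "\<exists>e1 e2 f1 f2. (\<forall>a1 a2. PX M1 (a1 *s e1 + a2 *s e2)) \<and> (\<forall>b1 b2. PX M2 (b1 *s f1 + b2 *s f2)) \<and>
    Q e1 = 0 \<and> Q e2 = 0 \<and> Q f1 = 0 \<and> Q f2 = 0 \<and>
    g e1 e2 = 0 \<and> g f1 f2 = 0 \<and> g e1 f2 = 0 \<and> g e2 f1 = 0 \<and> g e1 f1 = 1 \<and> g e2 f2 = 1"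
proof -
  have Ms1: "psingular scale sing M1" using M1 unfolding pmax_singular_def by blast
  have Ms2: "psingular scale sing M2" using M2 unfolding pmax_singular_def by blast
  have a0: "a \<noteq> 0" and bna: "b \<notin> span {a}" using indep2_props[OF ab] by auto
  have ainab: "a \<in> span {a, b}" and binab: "b \<in> span {a, b}" by (simp_all add: span_base)
  have Qa: "Q a = 0" and Qb: "Q b = 0" using sing_sub[OF sab] ainab binab by auto
  obtain e1 where e1: "PX M1 e1" "e1 \<noteq> 0"
  proof (rule ccontr)
    assume "\<not> thesis"
    then have z: "\<And>v. PX M1 v \<Longrightarrow> v = 0" using that by blast
    then have "PX M1 a" using TM_max[OF M1 Qa] by force
    then show False using z a0 by blast
  qed
  obtain e2 where e2: "PX M1 e2" "e2 \<notin> span {e1}"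
  proof (rule ccontr)
    assume "\<not> thesis"
    then have inspan: "\<And>v. PX M1 v \<Longrightarrow> v \<in> span {e1}" using that by blast
    have perp_of: "\<And>w. g w e1 = 0 \<Longrightarrow> (\<And>s. PX M1 s \<Longrightarrow> g w s = 0)"
    proof -
      fix w s assume w: "g w e1 = 0" and s: "PX M1 s"
      obtain k where "s = k *s e1" using inspan[OF s] span_singleton by auto
      then show "g w s = 0" using w by (simp add: g_scale_r)
    qed
    have ga: "g a e1 = 0 \<and> g b e1 = 0"
    proof (rule ccontr)
      assume nb: "\<not> (g a e1 = 0 \<and> g b e1 = 0)"
      let ?z = "g b e1 *s a + (- g a e1) *s b"
      have z0: "?z \<noteq> 0"
      proof
        assume "?z = 0"
        then have "g b e1 = 0 \<and> - g a e1 = 0" using indep2_coef[OF ab] by blast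
        then show False using nb by simp
      qed
      have zab: "?z \<in> span {a, b}" using span2 by blast
      have Qz: "Q ?z = 0" using sing_sub[OF sab zab] .
      have gz: "g ?z e1 = 0" by (simp add: g_simps mult.commute)
      have "PX M1 ?z" using TM_max[OF M1 Qz perp_of[OF gz]] .
      then have "?z \<in> span {e1}" using inspan by blast
      then have "e1 \<in> span {?z}" using span1_exch z0 by blast
      then have "e1 \<in> span {a, b}" using span1_sub[OF zab] by blast
      then have "g a e1 = 0" "g b e1 = 0" using sing_sub_g[OF sab] ainab binab by auto
      then show False using nb by blast
    qed
    have "PX M1 a" using TM_max[OF M1 Qa perp_of] ga by blast
    then have ae: "a \<in> span {e1}" using inspan by blast
    have "PX M1 b" using TM_max[OF M1 Qb perp_of] ga by blast
    then have "b \<in> span {e1}" using inspan by blast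
    moreover have "span {e1} = span {a}" using span1_eq[OF ae a0] by simp
    ultimately show False using bna by blast
  qed
  have e20: "e2 \<noteq> 0" using e2(2) span_zero by auto
  have e1n: "e1 \<notin> span {e2}" using e2(2) span1_exch e1(2) by blast
  obtain f1 where f1: "PX M2 f1" "g f1 e1 = 1" "g f1 e2 = 0"
    using dual_vec[OF M1 M2 disj e1 e2] by blast
  obtain f2 where f2: "PX M2 f2" "g f2 e2 = 1" "g f2 e1 = 0"
    using dual_vec[OF M1 M2 disj e2(1) e20 e1(1) e1n] by blast
  have "\<forall>a1 a2. PX M1 (a1 *s e1 + a2 *s e2)" using TM_comb[OF Ms1 e1(1) e2(1)] by blast
  moreover have "\<forall>b1 b2. PX M2 (b1 *s f1 + b2 *s f2)" using TM_comb[OF Ms2 f1(1) f2(1)] by blast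
  moreover have "Q e1 = 0" "Q e2 = 0" using PX_Q[OF psingular_sub[OF Ms1]] e1 e2 by auto
  moreover have "Q f1 = 0" "Q f2 = 0" using PX_Q[OF psingular_sub[OF Ms2]] f1 f2 by auto
  moreover have "g e1 e2 = 0" using TM_g[OF Ms1 e1(1) e2(1)] .
  moreover have "g f1 f2 = 0" using TM_g[OF Ms2 f1(1) f2(1)] .
  moreover have "g e1 f2 = 0" "g e2 f1 = 0" "g e1 f1 = 1" "g e2 f2 = 1"
    using f1 f2 g_sym[of e1 f2] g_sym[of e2 f1] g_sym[of e1 f1] g_sym[of e2 f2] by simp_all
  ultimately show ?thesis by blast
qed

theorem PS_main:
  assumes nice: "pnice scale sing X"
    and witt: "\<exists>S. finite S \<and> card S = n \<and> independent S \<and> sing (span S)" and n2: "n \<ge> 2"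
  shows "pg_span_points scale X \<inter> ppoints scale sing = X"
proof -
  obtain M1 M2 where M: "pmax_singular scale sing M1" "pmax_singular scale sing M2"
    "M1 \<subseteq> X" "M2 \<subseteq> X" "M1 \<inter> M2 = {}" and Xsub: "psubspace scale sing X"
    using nice unfolding pnice_def by blast
  obtain S where S: "finite S" "card S = n" "independent S" "sing (span S)" using witt by blast
  have "S \<noteq> {}" using S n2 by auto
  then obtain a where a: "a \<in> S" by blast
  have "card (S - {a}) = n - 1" using S a by (simp add: card_Diff_singleton)
  then have "card (S - {a}) \<ge> 1" using n2 by simp
  then have "S - {a} \<noteq> {}" by (metis card.empty not_one_le_zero)
  then obtain b where b: "b \<in> S" "b \<noteq> a" by blast
  have ab: "independent {a, b}" by (rule independent_mono[OF S(3)]) (use a b in auto)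
  have anb: "a \<noteq> b" using b by auto
  have sab: "sing (span {a, b})"
  proof (rule ts_span2)
    have "a \<in> span S" "b \<in> span S" using a b span_base by auto
    then show "Q a = 0" "Q b = 0" "g a b = 0" using sing_sub[OF S(4)] sing_sub_g[OF S(4)] by blast+
  qed
  obtain e1 e2 f1 f2 where fr: "\<forall>a1 a2. PX M1 (a1 *s e1 + a2 *s e2)" "\<forall>b1 b2. PX M2 (b1 *s f1 + b2 *s f2)"
    "Q e1 = 0" "Q e2 = 0" "Q f1 = 0" "Q f2 = 0"
    "g e1 e2 = 0" "g f1 f2 = 0" "g e1 f2 = 0" "g e2 f1 = 0" "g e1 f1 = 1" "g e2 f2 = 1"
    using frame[OF M(1) M(2) M(5) ab anb sab] by blast
  interpret H: PSH \<sigma> \<delta> scale sing g Q X e1 e2 f1 f2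
  proof unfold_locales
    show "psubspace scale sing X" by (rule Xsub)
    show "\<And>a1 a2. PX X (a1 *s e1 + a2 *s e2)" using fr(1) PX_mono[OF M(3)] by blast
    show "\<And>b1 b2. PX X (b1 *s f1 + b2 *s f2)" using fr(2) PX_mono[OF M(4)] by blast
  qed (rule fr)+
  show ?thesis
  proof
    show "pg_span_points scale X \<inter> ppoints scale sing \<subseteq> X"
    proof
      fix q assume q: "q \<in> pg_span_points scale X \<inter> ppoints scale sing"
      then obtain v where v: "q = span {v}" "v \<noteq> 0" "v \<in> span (\<Union>X)"
        unfolding pg_span_points_def vspan_def by blast
      have "Q v = 0" using ppoint_Q q v span_base by blast
      then show "q \<in> X" using H.main_H v by blast
    qed
  next
    show "X \<subseteq> pg_span_points scale X \<inter> ppoints scale sing"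
    proof
      fix p assume p: "p \<in> X"
      then have pp: "p \<in> ppoints scale sing" using Xsub unfolding psubspace_def by blast
      then obtain w where w: "w \<noteq> 0" "p = span {w}" using ppointsE by metis
      have "w \<in> \<Union>X" using p w span_base by blast
      then have "w \<in> span (\<Union>X)" using span_base by blast
      then show "p \<in> pg_span_points scale X \<inter> ppoints scale sing"
        unfolding pg_span_points_def vspan_def using pp w by blast
    qed
  qed
qed

end



lemma herm_PS:
  assumes vs: "vector_space scale" and h: "nondeg_hermitian scale \<sigma> f"
  shows "PS \<sigma> 1 scale (tot_iso f) f (\<lambda>v. f v v)"
proof -
  interpret vector_space scale by fact
  have fadd: "\<And>u u' v. f (u + u') v = f u v + f u' v"
    and fsc: "\<And>a u v. f (scale a u) v = a * f u v"
    and fsym: "\<And>u v. f v u = \<sigma> (f u v)"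
    and sadd: "\<And>a b. \<sigma> (a + b) = \<sigma> a + \<sigma> b"
    and smul: "\<And>a b. \<sigma> (a * b) = \<sigma> a * \<sigma> b"
    and ss: "\<And>a. \<sigma> (\<sigma> a) = a"
    and sid: "\<sigma> \<noteq> id"
    using h unfolding nondeg_hermitian_def nontrivial_involution_def by blast+
  interpret invol \<sigma> by unfold_locales (simp_all add: sadd smul ss)
  obtain b where "\<sigma> b \<noteq> b" using sid by (metis eq_id_iff)
  then obtain a0 where a0: "a0 + \<sigma> a0 = 1" using trace_one by blast
  have fadd_r: "f u (v + w) = f u v + f u w" for u v w
    by (metis fadd fsym sadd)
  have fsc_r: "f u (scale a v) = \<sigma> a * f u v" for u v a
    by (metis fsc fsym smul ss)
  show ?thesis
  proof unfold_locales
    show "(1::'a) = 0 \<and> (\<forall>a. \<sigma> a = a) \<or> 1 = 1 \<and> (\<exists>a0. a0 + \<sigma> a0 = 1)" using a0 by blast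
  next
    fix u u' v show "f (u + u') v = f u v + f u' v" by (rule fadd)
  next
    fix a u v show "f (scale a u) v = a * f u v" by (rule fsc)
  next
    fix u v show "f v u = \<sigma> (f u v)" by (rule fsym)
  next
    fix u v show "f (u + v) (u + v) = f u u + f v v + f u v + 1 * f v u"
      by (simp add: fadd fadd_r algebra_simps)
  next
    fix a v show "f (scale a v) (scale a v) = a * \<sigma> a * f v v"
      by (metis fsc fsc_r fsym mult.assoc mult.commute)
  next
    fix v show "f v v = 0 \<Longrightarrow> f v v = 0" .
  next
    fix v show "\<sigma> (f v v) = f v v" using fsym[of v v] by simp
  next
    fix A show "tot_iso f (span A) = ((\<forall>v\<in>span A. f v v = 0) \<and> (\<forall>u\<in>span A. \<forall>v\<in>span A. f u v = 0))"
      unfolding tot_iso_def by auto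
  qed
qed


lemma quad_PS:
  assumes vs: "vector_space scale" and h: "nondeg_quadratic scale q"
  shows "PS id 0 scale (tot_sing q) (bilin_of q) q"
proof -
  interpret vector_space scale by fact
  have qsc: "\<And>a v. q (scale a v) = a * a * q v"
    and badd: "\<And>u u' v. bilin_of q (u + u') v = bilin_of q u v + bilin_of q u' v"
    and bsc: "\<And>a u v. bilin_of q (scale a u) v = a * bilin_of q u v"
    using h unfolding nondeg_quadratic_def by blast+
  interpret invol id by unfold_locales simp_all
  show ?thesis
  proof unfold_locales
    show "(0::'a) = 0 \<and> (\<forall>a. id a = a) \<or> 0 = 1 \<and> (\<exists>a0. a0 + id a0 = 1)" by simp
  next
    fix u u' v show "bilin_of q (u + u') v = bilin_of q u v + bilin_of q u' v" by (rule badd)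
  next
    fix a u v show "bilin_of q (scale a u) v = a * bilin_of q u v" by (rule bsc)
  next
    fix u v show "bilin_of q v u = id (bilin_of q u v)" unfolding bilin_of_def by (simp add: add.commute)
  next
    fix u v show "q (u + v) = q u + q v + bilin_of q u v + 0 * bilin_of q v u"
      unfolding bilin_of_def by simp
  next
    fix a v show "q (scale a v) = a * id a * q v" using qsc by simp
  next
    fix v assume q0: "q v = 0"
    have "v + v = scale (1 + 1) v" by (metis scale_left_distrib scale_one)
    then have "q (v + v) = 0" using qsc[of "1 + 1" v] q0 by simp
    then show "bilin_of q v v = 0" unfolding bilin_of_def using q0 by simp
  next
    fix v show "id (q v) = q v" by simp
  next
    fix A
    show "tot_sing q (span A) = ((\<forall>v\<in>span A. q v = 0) \<and> (\<forall>u\<in>span A. \<forall>v\<in>span A. bilin_of q u v = 0))"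
      unfolding tot_sing_def bilin_of_def by (auto simp: span_add)
  qed
qed

theorem lemma2:
  fixes scale :: "'k::field \<Rightarrow> 'v::ab_group_add \<Rightarrow> 'v"
    and sing :: "'v set \<Rightarrow> bool"
    and n :: nat
    and X :: "'v set set"
  assumes "vector_space scale"
    and "(\<exists>\<sigma> f. nondeg_hermitian scale \<sigma> f \<and> sing = tot_iso f) \<or>
         (\<exists>q. nondeg_quadratic scale q \<and> sing = tot_sing q \<and> \<not> (n = 2 \<and> has_dim scale 4))"
    and "witt_index scale sing n"
    and "n \<ge> 2"
    and "pnice scale sing X"
  shows "pg_span_points scale X \<inter> ppoints scale sing = X"
proof -
  have W: "\<exists>S. finite S \<and> card S = n \<and> \<not> module.dependent scale S \<and> sing (module.span scale S)"
    using assms(3) unfolding witt_index_def vindep_def vspan_def by blast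
  from assms(2) show ?thesis
  proof
    assume "\<exists>\<sigma> f. nondeg_hermitian scale \<sigma> f \<and> sing = tot_iso f"
    then obtain \<sigma> f where h: "nondeg_hermitian scale \<sigma> f" and s: "sing = tot_iso f" by blast
    interpret P: PS \<sigma> 1 scale sing f "\<lambda>v. f v v" using herm_PS[OF assms(1) h] s by simp
    show ?thesis using P.PS_main[OF assms(5) W assms(4)] .
  next
    assume "\<exists>q. nondeg_quadratic scale q \<and> sing = tot_sing q \<and> \<not> (n = 2 \<and> has_dim scale 4)"
    then obtain q where h: "nondeg_quadratic scale q" and s: "sing = tot_sing q" by blast
    interpret P: PS id 0 scale sing "bilin_of q" q using quad_PS[OF assms(1) h] s by simp
    show ?thesis using P.PS_main[OF assms(5) W assms(4)] .
  qed
qed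


end
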